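(* Let $X$ and $Y$ be scalable monoids over a ring $R$. Then the tensor product $X\otimes Y$ is a scalable monoid over $R$.
   Context: A scalable monoid over a (unital, associative) ring $R$ is a monoid $X$ (identity $1_X$, product written $xy$) together with a map $R\times X\to X$, $(\alpha,x)\mapsto\alpha\cdot x$, such that $1\cdot x=x$, $\alpha\cdot(\beta\cdot x)=\alpha\beta\cdot x$ and $\alpha\cdot(xy)=(\alpha\cdot x)y=x(\alpha\cdot y)$. For scalable monoids $X,Y$ over $R$, define the relation $\backsim_\otimes$ on $X\times Y$ by $(x_1,y_1)\backsim_\otimes(x_2,y_2)$ iff $(\alpha\cdot x_1,\beta\cdot y_1)=(\beta\cdot x_2,\alpha\cdot y_2)$ for some $\alpha,\beta\in R$; it is an equivalence relation. Let $x\otimes y$ be the class of $(x,y)$ and $X\otimes Y=\{x\otimes y\mid x\in X,y\in Y\}$, equipped with $(x_1\otimes y_1)(x_2\otimes y_2)=x_1x_2\otimes y_1y_2$, $\lambda\cdot(x\otimes y)=(\lambda\cdot x)\otimes y$, and identity $1_X\otimes1_Y$. *)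

theory Defs
  imports Main
begin

definition scalable_monoid ::
  "'x set \<Rightarrow> ('x \<Rightarrow> 'x \<Rightarrow> 'x) \<Rightarrow> 'x \<Rightarrow> ('r::ring_1 \<Rightarrow> 'x \<Rightarrow> 'x) \<Rightarrow> bool" where
  "scalable_monoid X mult one sc \<longleftrightarrow>
     (\<forall>x\<in>X. \<forall>y\<in>X. mult x y \<in> X) \<and>
     (\<forall>x\<in>X. \<forall>y\<in>X. \<forall>z\<in>X. mult (mult x y) z = mult x (mult y z)) \<and>
     one \<in> X \<and>
     (\<forall>x\<in>X. mult one x = x \<and> mult x one = x) \<and>
     (\<forall>a. \<forall>x\<in>X. sc a x \<in> X) \<and>
     (\<forall>x\<in>X. sc 1 x = x) \<and>
     (\<forall>a b. \<forall>x\<in>X. sc a (sc b x) = sc (a * b) x) \<and>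
     (\<forall>a. \<forall>x\<in>X. \<forall>y\<in>X. sc a (mult x y) = mult (sc a x) y \<and> sc a (mult x y) = mult x (sc a y))"

definition tensor_rel ::
  "('r::ring_1 \<Rightarrow> 'x \<Rightarrow> 'x) \<Rightarrow> ('r \<Rightarrow> 'y \<Rightarrow> 'y) \<Rightarrow> 'x \<times> 'y \<Rightarrow> 'x \<times> 'y \<Rightarrow> bool" where
  "tensor_rel scX scY p q \<longleftrightarrow>
     (\<exists>a b. scX a (fst p) = scX b (fst q) \<and> scY b (snd p) = scY a (snd q))"

definition tens ::
  "'x set \<Rightarrow> 'y set \<Rightarrow> ('r::ring_1 \<Rightarrow> 'x \<Rightarrow> 'x) \<Rightarrow> ('r \<Rightarrow> 'y \<Rightarrow> 'y) \<Rightarrow> 'x \<Rightarrow> 'y \<Rightarrow> ('x \<times> 'y) set" where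
  "tens X Y scX scY x y = {q \<in> X \<times> Y. tensor_rel scX scY (x, y) q}"

definition tensor_carrier ::
  "'x set \<Rightarrow> 'y set \<Rightarrow> ('r::ring_1 \<Rightarrow> 'x \<Rightarrow> 'x) \<Rightarrow> ('r \<Rightarrow> 'y \<Rightarrow> 'y) \<Rightarrow> ('x \<times> 'y) set set" where
  "tensor_carrier X Y scX scY = {tens X Y scX scY x y | x y. x \<in> X \<and> y \<in> Y}"

text \<open>Operations on classes, defined via (arbitrarily chosen) representatives;
  that they do not depend on the choice is part of the content of the theorem.\<close>

definition tensor_mult ::
  "'x set \<Rightarrow> 'y set \<Rightarrow> ('r::ring_1 \<Rightarrow> 'x \<Rightarrow> 'x) \<Rightarrow> ('r \<Rightarrow> 'y \<Rightarrow> 'y) \<Rightarrow>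
   ('x \<Rightarrow> 'x \<Rightarrow> 'x) \<Rightarrow> ('y \<Rightarrow> 'y \<Rightarrow> 'y) \<Rightarrow> ('x \<times> 'y) set \<Rightarrow> ('x \<times> 'y) set \<Rightarrow> ('x \<times> 'y) set" where
  "tensor_mult X Y scX scY multX multY A B =
     (let p = (SOME p. p \<in> A); q = (SOME q. q \<in> B)
      in tens X Y scX scY (multX (fst p) (fst q)) (multY (snd p) (snd q)))"

definition tensor_one ::
  "'x set \<Rightarrow> 'y set \<Rightarrow> ('r::ring_1 \<Rightarrow> 'x \<Rightarrow> 'x) \<Rightarrow> ('r \<Rightarrow> 'y \<Rightarrow> 'y) \<Rightarrow> 'x \<Rightarrow> 'y \<Rightarrow> ('x \<times> 'y) set" where
  "tensor_one X Y scX scY oneX oneY = tens X Y scX scY oneX oneY"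

definition tensor_sc ::
  "'x set \<Rightarrow> 'y set \<Rightarrow> ('r::ring_1 \<Rightarrow> 'x \<Rightarrow> 'x) \<Rightarrow> ('r \<Rightarrow> 'y \<Rightarrow> 'y) \<Rightarrow> 'r \<Rightarrow> ('x \<times> 'y) set \<Rightarrow> ('x \<times> 'y) set" where
  "tensor_sc X Y scX scY l A =
     (let p = (SOME p. p \<in> A) in tens X Y scX scY (scX l (fst p)) (snd p))"

end

theory Submission
  imports Defs
begin

lemma sm_comm:
  assumes "scalable_monoid X mult one sc" "x \<in> X"
  shows "sc a (sc b x) = sc b (sc a x)"
proof -
  have m: "mult x one = x" and o: "one \<in> X" and b1: "sc b one \<in> X" and ax: "sc a x \<in> X"
    using assms unfolding scalable_monoid_def by auto
  have D1: "\<And>c u v. u \<in> X \<Longrightarrow> v \<in> X \<Longrightarrow> sc c (mult u v) = mult (sc c u) v"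
   and D2: "\<And>c u v. u \<in> X \<Longrightarrow> v \<in> X \<Longrightarrow> sc c (mult u v) = mult u (sc c v)"
    using assms(1) unfolding scalable_monoid_def by blast+
  have "sc a (sc b x) = sc a (sc b (mult x one))" using m by simp
  also have "\<dots> = sc a (mult x (sc b one))" using D2 assms(2) o by metis
  also have "\<dots> = mult (sc a x) (sc b one)" using D1 assms(2) b1 by metis
  also have "\<dots> = sc b (mult (sc a x) one)" using D2 ax o by metis
  also have "\<dots> = sc b (sc a x)" using assms ax unfolding scalable_monoid_def by auto
  finally show ?thesis .
qed

lemma sm_sc_mult:
  assumes "scalable_monoid X mult one sc" "x \<in> X"
  shows "sc a (sc b x) = sc (a * b) x"
  using assms unfolding scalable_monoid_def by auto

lemma rel_trans:
  assumes X: "scalable_monoid X multX oneX scX" and Y: "scalable_monoid Y multY oneY scY"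
    and "x1 \<in> X" "x2 \<in> X" "x3 \<in> X" "y1 \<in> Y" "y2 \<in> Y" "y3 \<in> Y"
    and "tensor_rel scX scY (x1, y1) (x2, y2)" "tensor_rel scX scY (x2, y2) (x3, y3)"
  shows "tensor_rel scX scY (x1, y1) (x3, y3)"
proof -
  from assms obtain a b c d where h: "scX a x1 = scX b x2" "scY b y1 = scY a y2"
    "scX c x2 = scX d x3" "scY d y2 = scY c y3" unfolding tensor_rel_def by auto
  have "scX (c*a) x1 = scX c (scX a x1)" using sm_sc_mult[OF X] assms by metis
  also have "\<dots> = scX c (scX b x2)" using h by simp
  also have "\<dots> = scX b (scX c x2)" using sm_comm[OF X] assms by metis
  also have "\<dots> = scX b (scX d x3)" using h by simp
  also have "\<dots> = scX (b*d) x3" using sm_sc_mult[OF X] assms by metis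
  finally have 1: "scX (c*a) x1 = scX (b*d) x3" .
  have "scY (b*d) y1 = scY d (scY b y1)" using sm_sc_mult[OF Y] sm_comm[OF Y] assms by metis
  also have "\<dots> = scY d (scY a y2)" using h by simp
  also have "\<dots> = scY a (scY d y2)" using sm_comm[OF Y] assms by metis
  also have "\<dots> = scY a (scY c y3)" using h by simp
  also have "\<dots> = scY (c*a) y3" using sm_sc_mult[OF Y] sm_comm[OF Y] assms by metis
  finally have 2: "scY (b*d) y1 = scY (c*a) y3" .
  show ?thesis using 1 2 unfolding tensor_rel_def by auto
qed

lemma rel_sym: "tensor_rel scX scY p q \<Longrightarrow> tensor_rel scX scY q p"
  unfolding tensor_rel_def by metis

lemma rel_refl:
  assumes X: "scalable_monoid X multX oneX scX" and Y: "scalable_monoid Y multY oneY scY"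
    and "x \<in> X" "y \<in> Y"
  shows "tensor_rel scX scY (x, y) (x, y)"
  unfolding tensor_rel_def by auto

lemma tens_mem:
  assumes X: "scalable_monoid X multX oneX scX" and Y: "scalable_monoid Y multY oneY scY"
    and "x \<in> X" "y \<in> Y"
  shows "(x, y) \<in> tens X Y scX scY x y"
  using rel_refl[OF assms] assms unfolding tens_def by auto

lemma tens_eq:
  assumes X: "scalable_monoid X multX oneX scX" and Y: "scalable_monoid Y multY oneY scY"
    and "x \<in> X" "y \<in> Y" "p \<in> tens X Y scX scY x y"
  shows "tens X Y scX scY (fst p) (snd p) = tens X Y scX scY x y"
proof -
  have p: "fst p \<in> X" "snd p \<in> Y" "tensor_rel scX scY (x, y) (fst p, snd p)"
    using assms(5) unfolding tens_def by auto
  show ?thesis unfolding tens_def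
  proof (intro Collect_cong conj_cong refl iffI)
    fix q assume "q \<in> X \<times> Y" "tensor_rel scX scY (fst p, snd p) q"
    then show "tensor_rel scX scY (x, y) q"
      using rel_trans[OF X Y, of x "fst p" "fst q" y "snd p" "snd q"] p assms by auto
  next
    fix q assume "q \<in> X \<times> Y" "tensor_rel scX scY (x, y) q"
    then show "tensor_rel scX scY (fst p, snd p) q"
      using rel_trans[OF X Y, of "fst p" x "fst q" "snd p" y "snd q"] rel_sym[OF p(3)] p assms by auto
  qed
qed

lemma tens_some:
  assumes X: "scalable_monoid X multX oneX scX" and Y: "scalable_monoid Y multY oneY scY"
    and "x \<in> X" "y \<in> Y"
  defines "p \<equiv> SOME p. p \<in> tens X Y scX scY x y"
  shows "p \<in> tens X Y scX scY x y" "fst p \<in> X" "snd p \<in> Y"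
    "tensor_rel scX scY (x, y) (fst p, snd p)"
proof -
  show 1: "p \<in> tens X Y scX scY x y" unfolding p_def by (rule someI, rule tens_mem[OF assms(1-4)])
  then show "fst p \<in> X" "snd p \<in> Y" "tensor_rel scX scY (x, y) (fst p, snd p)"
    unfolding tens_def by auto
qed

lemma mult_tens:
  assumes X: "scalable_monoid X multX oneX scX" and Y: "scalable_monoid Y multY oneY scY"
    and "x1 \<in> X" "y1 \<in> Y" "x2 \<in> X" "y2 \<in> Y"
  shows "tensor_mult X Y scX scY multX multY (tens X Y scX scY x1 y1) (tens X Y scX scY x2 y2)
     = tens X Y scX scY (multX x1 x2) (multY y1 y2)"
proof -
  define p where "p = (SOME p. p \<in> tens X Y scX scY x1 y1)"
  define q where "q = (SOME p. p \<in> tens X Y scX scY x2 y2)"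
  note P = tens_some[OF X Y assms(3,4), folded p_def]
  note Q = tens_some[OF X Y assms(5,6), folded q_def]
  obtain a b where h1: "scX a x1 = scX b (fst p)" "scY b y1 = scY a (snd p)"
    using P(4) unfolding tensor_rel_def by auto
  obtain c d where h2: "scX c x2 = scX d (fst q)" "scY d y2 = scY c (snd q)"
    using Q(4) unfolding tensor_rel_def by auto
  have sx: "\<And>a x y. x \<in> X \<Longrightarrow> y \<in> X \<Longrightarrow> scX a (multX x y) = multX (scX a x) y \<and> scX a (multX x y) = multX x (scX a y)"
    and cx: "\<And>a x. x \<in> X \<Longrightarrow> scX a x \<in> X" using X unfolding scalable_monoid_def by blast+
  have sy: "\<And>a x y. x \<in> Y \<Longrightarrow> y \<in> Y \<Longrightarrow> scY a (multY x y) = multY (scY a x) y \<and> scY a (multY x y) = multY x (scY a y)"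
    and cy: "\<And>a x. x \<in> Y \<Longrightarrow> scY a x \<in> Y" using Y unfolding scalable_monoid_def by blast+
  have "scX (a*c) (multX x1 x2) = scX a (scX c (multX x1 x2))" using sm_sc_mult[OF X] X assms
    unfolding scalable_monoid_def by metis
  also have "\<dots> = multX (scX a x1) (scX c x2)" using sx cx assms by metis
  also have "\<dots> = multX (scX b (fst p)) (scX d (fst q))" using h1 h2 by simp
  also have "\<dots> = scX b (scX d (multX (fst p) (fst q)))" using sx cx P Q by metis
  also have "\<dots> = scX (b*d) (multX (fst p) (fst q))" using sm_sc_mult[OF X] X P Q
    unfolding scalable_monoid_def by metis
  finally have e1: "scX (a*c) (multX x1 x2) = scX (b*d) (multX (fst p) (fst q))" .
  have "scY (b*d) (multY y1 y2) = scY b (scY d (multY y1 y2))" using sm_sc_mult[OF Y] Y assms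
    unfolding scalable_monoid_def by metis
  also have "\<dots> = multY (scY b y1) (scY d y2)" using sy cy assms by metis
  also have "\<dots> = multY (scY a (snd p)) (scY c (snd q))" using h1 h2 by simp
  also have "\<dots> = scY a (scY c (multY (snd p) (snd q)))" using sy cy P Q by metis
  also have "\<dots> = scY (a*c) (multY (snd p) (snd q))" using sm_sc_mult[OF Y] Y P Q
    unfolding scalable_monoid_def by metis
  finally have e2: "scY (b*d) (multY y1 y2) = scY (a*c) (multY (snd p) (snd q))" .
  have r: "tensor_rel scX scY (multX x1 x2, multY y1 y2) (multX (fst p) (fst q), multY (snd p) (snd q))"
    using e1 e2 unfolding tensor_rel_def by auto
  have mX: "multX x1 x2 \<in> X" "multX (fst p) (fst q) \<in> X" using X P Q assms unfolding scalable_monoid_def by auto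
  have mY: "multY y1 y2 \<in> Y" "multY (snd p) (snd q) \<in> Y" using Y P Q assms unfolding scalable_monoid_def by auto
  have "tens X Y scX scY (fst (multX (fst p) (fst q), multY (snd p) (snd q))) (snd (multX (fst p) (fst q), multY (snd p) (snd q)))
     = tens X Y scX scY (multX x1 x2) (multY y1 y2)"
    by (rule tens_eq[OF X Y mX(1) mY(1)]) (use r mX mY in \<open>auto simp: tens_def\<close>)
  then show ?thesis unfolding tensor_mult_def Let_def p_def[symmetric] q_def[symmetric] by simp
qed

lemma sc_tens:
  assumes X: "scalable_monoid X multX oneX scX" and Y: "scalable_monoid Y multY oneY scY"
    and "x \<in> X" "y \<in> Y"
  shows "tensor_sc X Y scX scY l (tens X Y scX scY x y) = tens X Y scX scY (scX l x) y"
proof -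
  define p where "p = (SOME p. p \<in> tens X Y scX scY x y)"
  note P = tens_some[OF X Y assms(3,4), folded p_def]
  obtain a b where h1: "scX a x = scX b (fst p)" "scY b y = scY a (snd p)"
    using P(4) unfolding tensor_rel_def by auto
  have "scX a (scX l x) = scX l (scX a x)" using sm_comm[OF X] assms by metis
  also have "\<dots> = scX l (scX b (fst p))" using h1 by simp
  also have "\<dots> = scX b (scX l (fst p))" using sm_comm[OF X] P by metis
  finally have r: "tensor_rel scX scY (scX l x, y) (scX l (fst p), snd p)"
    using h1 unfolding tensor_rel_def by auto
  have c: "scX l x \<in> X" "scX l (fst p) \<in> X" using X P assms unfolding scalable_monoid_def by auto
  have "tens X Y scX scY (fst (scX l (fst p), snd p)) (snd (scX l (fst p), snd p))
     = tens X Y scX scY (scX l x) y"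
    by (rule tens_eq[OF X Y c(1) assms(4)]) (use r c P in \<open>auto simp: tens_def\<close>)
  then show ?thesis unfolding tensor_sc_def Let_def p_def[symmetric] by simp
qed

theorem proposition2p21:
  fixes X :: "'x set" and Y :: "'y set"
    and multX :: "'x \<Rightarrow> 'x \<Rightarrow> 'x" and multY :: "'y \<Rightarrow> 'y \<Rightarrow> 'y"
    and oneX :: 'x and oneY :: 'y
    and scX :: "'r::ring_1 \<Rightarrow> 'x \<Rightarrow> 'x" and scY :: "'r \<Rightarrow> 'y \<Rightarrow> 'y"
  assumes "scalable_monoid X multX oneX scX"
    and "scalable_monoid Y multY oneY scY"
  shows "scalable_monoid (tensor_carrier X Y scX scY)
           (tensor_mult X Y scX scY multX multY)
           (tensor_one X Y scX scY oneX oneY)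
           (tensor_sc X Y scX scY)"
proof -
  note X = assms(1) and Y = assms(2)
  note MT = mult_tens[OF X Y] and ST = sc_tens[OF X Y]
  have x: "(\<forall>x\<in>X. \<forall>y\<in>X. multX x y \<in> X) \<and>
     (\<forall>x\<in>X. \<forall>y\<in>X. \<forall>z\<in>X. multX (multX x y) z = multX x (multX y z)) \<and>
     oneX \<in> X \<and>
     (\<forall>x\<in>X. multX oneX x = x \<and> multX x oneX = x) \<and>
     (\<forall>a. \<forall>x\<in>X. scX a x \<in> X) \<and>
     (\<forall>x\<in>X. scX 1 x = x) \<and>
     (\<forall>a b. \<forall>x\<in>X. scX a (scX b x) = scX (a * b) x) \<and>
     (\<forall>a. \<forall>x\<in>X. \<forall>y\<in>X. scX a (multX x y) = multX (scX a x) y \<and> scX a (multX x y) = multX x (scX a y))"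
    using X unfolding scalable_monoid_def by blast
  have y: "(\<forall>x\<in>Y. \<forall>y\<in>Y. multY x y \<in> Y) \<and>
     (\<forall>x\<in>Y. \<forall>y\<in>Y. \<forall>z\<in>Y. multY (multY x y) z = multY x (multY y z)) \<and>
     oneY \<in> Y \<and>
     (\<forall>x\<in>Y. multY oneY x = x \<and> multY x oneY = x) \<and>
     (\<forall>a. \<forall>x\<in>Y. scY a x \<in> Y)"
    using Y unfolding scalable_monoid_def by blast
  have D1: "\<And>c u v. u \<in> X \<Longrightarrow> v \<in> X \<Longrightarrow> multX (scX c u) v = scX c (multX u v)"
   and D2: "\<And>c u v. u \<in> X \<Longrightarrow> v \<in> X \<Longrightarrow> multX u (scX c v) = scX c (multX u v)"
    using X unfolding scalable_monoid_def by metis+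
  show ?thesis
    unfolding scalable_monoid_def tensor_carrier_def tensor_one_def
    using x y
  proof (intro conjI)
    show "\<forall>a. \<forall>A\<in>{tens X Y scX scY x y |x y. x \<in> X \<and> y \<in> Y}.
        tensor_sc X Y scX scY a A \<in> {tens X Y scX scY x y |x y. x \<in> X \<and> y \<in> Y}"
    proof (intro allI ballI)
      fix a A assume "A \<in> {tens X Y scX scY x y |x y. x \<in> X \<and> y \<in> Y}"
      then obtain u v where "A = tens X Y scX scY u v" "u \<in> X" "v \<in> Y" by blast
      then show "tensor_sc X Y scX scY a A \<in> {tens X Y scX scY x y |x y. x \<in> X \<and> y \<in> Y}"
      proof -
        have "scX a u \<in> X" using x \<open>u \<in> X\<close> by blast
        then show ?thesis using ST \<open>A = _\<close> \<open>u \<in> X\<close> \<open>v \<in> Y\<close> by blast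
      qed
    qed
    show "\<forall>A\<in>{tens X Y scX scY x y |x y. x \<in> X \<and> y \<in> Y}. \<forall>B\<in>{tens X Y scX scY x y |x y. x \<in> X \<and> y \<in> Y}.
        tensor_mult X Y scX scY multX multY A B \<in> {tens X Y scX scY x y |x y. x \<in> X \<and> y \<in> Y}"
    proof (intro ballI)
      fix A B assume "A \<in> {tens X Y scX scY x y |x y. x \<in> X \<and> y \<in> Y}" "B \<in> {tens X Y scX scY x y |x y. x \<in> X \<and> y \<in> Y}"
      then obtain u v u' v' where "A = tens X Y scX scY u v" "u \<in> X" "v \<in> Y"
        "B = tens X Y scX scY u' v'" "u' \<in> X" "v' \<in> Y" by blast
      then show "tensor_mult X Y scX scY multX multY A B \<in> {tens X Y scX scY x y |x y. x \<in> X \<and> y \<in> Y}"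
      proof -
        have "multX u u' \<in> X" "multY v v' \<in> Y" using x y \<open>u \<in> X\<close> \<open>u' \<in> X\<close> \<open>v \<in> Y\<close> \<open>v' \<in> Y\<close> by auto
        then show ?thesis using MT \<open>A = _\<close> \<open>B = _\<close> \<open>u \<in> X\<close> \<open>v \<in> Y\<close> \<open>u' \<in> X\<close> \<open>v' \<in> Y\<close> by blast
      qed
    qed
  qed (auto simp: MT ST D1 D2)
qed

end
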